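(* Every monoid that can be embedded into a sofic group is strongly sofic.
   Context: Hamming metric on $\operatorname{Map}(D)$ (monoid of maps $D\to D$, $D$ finite non-empty): $d_D^{\mathrm{Ham}}(f,g)=\frac{1}{|D|}|\{v:f(v)\ne g(v)\}|$. A group $G$ is sofic if for every finite $K\subset G$ and $\varepsilon>0$ there are a non-empty finite set $D$ and a map $\sigma\colon G\to\mathrm{Sym}(D)$ with $\sigma(1_G)=\mathrm{Id}_D$, $d_D^{\mathrm{Ham}}(\sigma(k_1k_2),\sigma(k_1)\sigma(k_2))\le\varepsilon$ for $k_1,k_2\in K$, and $d_D^{\mathrm{Ham}}(\sigma(k_1),\sigma(k_2))\ge1-\varepsilon$ for distinct $k_1,k_2\in K$. A monoid $M$ is strongly sofic if for every finite $K\subset M$ there is an integer $\Delta_K\ge1$ such that for every $\varepsilon>0$ there exist a non-empty finite set $D$ and a map $\sigma\colon M\to\operatorname{Map}(D)$ with (1) $\sigma(1_M)=\mathrm{Id}_D$; (2) $d_D^{\mathrm{Ham}}(\sigma(k_1k_2),\sigma(k_1)\sigma(k_2))\le\varepsilon$ for $k_1,k_2\in K$; (3) $d_D^{\mathrm{Ham}}(\sigma(k_1),\sigma(k_2))\ge1-\varepsilon$ for distinct $k_1,k_2\in K$; (4) $|\sigma(k)^{-1}(v)|\le\Delta_K$ for $k\in K$, $v\in D$. A monoid embeds into a group if there is an injective monoid morphism into it. *)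

theory Defs
  imports Complex_Main "HOL-Algebra.Group"
begin

text \<open>Finite sets D are taken as finite subsets of nat (every finite set is in bijection with one).
  Elements of Map(D) are represented by functions nat => nat mapping D into D; only values on D matter.\<close>

definition ham :: "nat set \<Rightarrow> (nat \<Rightarrow> nat) \<Rightarrow> (nat \<Rightarrow> nat) \<Rightarrow> real" where
  "ham D f g = real (card {v \<in> D. f v \<noteq> g v}) / real (card D)"

definition sofic_group :: "('b, 'd) monoid_scheme \<Rightarrow> bool" where
  "sofic_group G \<longleftrightarrow>
    (\<forall>K \<epsilon>. K \<subseteq> carrier G \<and> finite K \<and> \<epsilon> > (0::real) \<longrightarrow>
      (\<exists>(D::nat set) (\<sigma>::'b \<Rightarrow> nat \<Rightarrow> nat).
         finite D \<and> D \<noteq> {} \<and>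
         (\<forall>g\<in>carrier G. bij_betw (\<sigma> g) D D) \<and>
         (\<forall>v\<in>D. \<sigma> \<one>\<^bsub>G\<^esub> v = v) \<and>
         (\<forall>k1\<in>K. \<forall>k2\<in>K. ham D (\<sigma> (k1 \<otimes>\<^bsub>G\<^esub> k2)) (\<sigma> k1 \<circ> \<sigma> k2) \<le> \<epsilon>) \<and>
         (\<forall>k1\<in>K. \<forall>k2\<in>K. k1 \<noteq> k2 \<longrightarrow> ham D (\<sigma> k1) (\<sigma> k2) \<ge> 1 - \<epsilon>)))"

definition strongly_sofic :: "('a, 'c) monoid_scheme \<Rightarrow> bool" where
  "strongly_sofic M \<longleftrightarrow>
    (\<forall>K. K \<subseteq> carrier M \<and> finite K \<longrightarrow>
      (\<exists>\<Delta>::nat. \<Delta> \<ge> 1 \<and>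
        (\<forall>\<epsilon>::real. \<epsilon> > 0 \<longrightarrow>
          (\<exists>(D::nat set) (\<sigma>::'a \<Rightarrow> nat \<Rightarrow> nat).
             finite D \<and> D \<noteq> {} \<and>
             (\<forall>m\<in>carrier M. \<sigma> m ` D \<subseteq> D) \<and>
             (\<forall>v\<in>D. \<sigma> \<one>\<^bsub>M\<^esub> v = v) \<and>
             (\<forall>k1\<in>K. \<forall>k2\<in>K. ham D (\<sigma> (k1 \<otimes>\<^bsub>M\<^esub> k2)) (\<sigma> k1 \<circ> \<sigma> k2) \<le> \<epsilon>) \<and>
             (\<forall>k1\<in>K. \<forall>k2\<in>K. k1 \<noteq> k2 \<longrightarrow> ham D (\<sigma> k1) (\<sigma> k2) \<ge> 1 - \<epsilon>) \<and>
             (\<forall>k\<in>K. \<forall>v\<in>D. card {u \<in> D. \<sigma> k u = v} \<le> \<Delta>)))))"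

end

theory Submission
  imports Defs
begin

lemma fiber_le1:
  assumes "bij_betw f D D" "finite D"
  shows "card {u \<in> D. f u = v} \<le> 1"
proof -
  have "inj_on f D" using assms(1) bij_betw_imp_inj_on by blast
  hence "\<forall>x\<in>{u \<in> D. f u = v}. \<forall>y\<in>{u \<in> D. f u = v}. x = y"
    by (auto dest: inj_onD)
  thus ?thesis using card_le_Suc0_iff_eq[of "{u \<in> D. f u = v}"] assms(2) by auto
qed

theorem corollary3p5:
  fixes M :: "('a, 'c) monoid_scheme" and G :: "('b, 'd) monoid_scheme"
  assumes "monoid M" and "group G" and "sofic_group G"
    and "h \<in> hom M G" and "h \<one>\<^bsub>M\<^esub> = \<one>\<^bsub>G\<^esub>" and "inj_on h (carrier M)"
  shows "strongly_sofic M"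
  unfolding strongly_sofic_def
proof (intro allI impI)
  fix K assume K: "K \<subseteq> carrier M \<and> finite K"
  have Ksub: "K \<subseteq> carrier M" using K by simp
  have hc: "\<And>m. m \<in> carrier M \<Longrightarrow> h m \<in> carrier G" using assms(4) by (auto simp: hom_def)
  have hm: "\<And>x y. x \<in> carrier M \<Longrightarrow> y \<in> carrier M \<Longrightarrow> h (x \<otimes>\<^bsub>M\<^esub> y) = h x \<otimes>\<^bsub>G\<^esub> h y"
    using assms(4) by (auto simp: hom_def)
  show "\<exists>\<Delta>::nat. \<Delta> \<ge> 1 \<and> (\<forall>\<epsilon>::real. \<epsilon> > 0 \<longrightarrow>
          (\<exists>(D::nat set) (\<sigma>::'a \<Rightarrow> nat \<Rightarrow> nat).
             finite D \<and> D \<noteq> {} \<and>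
             (\<forall>m\<in>carrier M. \<sigma> m ` D \<subseteq> D) \<and>
             (\<forall>v\<in>D. \<sigma> \<one>\<^bsub>M\<^esub> v = v) \<and>
             (\<forall>k1\<in>K. \<forall>k2\<in>K. ham D (\<sigma> (k1 \<otimes>\<^bsub>M\<^esub> k2)) (\<sigma> k1 \<circ> \<sigma> k2) \<le> \<epsilon>) \<and>
             (\<forall>k1\<in>K. \<forall>k2\<in>K. k1 \<noteq> k2 \<longrightarrow> ham D (\<sigma> k1) (\<sigma> k2) \<ge> 1 - \<epsilon>) \<and>
             (\<forall>k\<in>K. \<forall>v\<in>D. card {u \<in> D. \<sigma> k u = v} \<le> \<Delta>)))"
  proof (intro exI[of _ 1] conjI allI impI, simp)
    fix \<epsilon> :: real assume e: "\<epsilon> > 0"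
    have "h ` K \<subseteq> carrier G \<and> finite (h ` K) \<and> \<epsilon> > 0" using K hc e by auto
    note KK = this
    obtain D and \<sigma> :: "'b \<Rightarrow> nat \<Rightarrow> nat" where
      D: "finite D" "D \<noteq> {}" and bij: "\<forall>g\<in>carrier G. bij_betw (\<sigma> g) D D"
      and one: "\<forall>v\<in>D. \<sigma> \<one>\<^bsub>G\<^esub> v = v"
      and mul: "\<forall>k1\<in>h ` K. \<forall>k2\<in>h ` K. ham D (\<sigma> (k1 \<otimes>\<^bsub>G\<^esub> k2)) (\<sigma> k1 \<circ> \<sigma> k2) \<le> \<epsilon>"
      and dis: "\<forall>k1\<in>h ` K. \<forall>k2\<in>h ` K. k1 \<noteq> k2 \<longrightarrow> ham D (\<sigma> k1) (\<sigma> k2) \<ge> 1 - \<epsilon>"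
      using assms(3)[unfolded sofic_group_def, rule_format, OF KK] by auto
    show "\<exists>(D::nat set) (\<tau>::'a \<Rightarrow> nat \<Rightarrow> nat).
             finite D \<and> D \<noteq> {} \<and>
             (\<forall>m\<in>carrier M. \<tau> m ` D \<subseteq> D) \<and>
             (\<forall>v\<in>D. \<tau> \<one>\<^bsub>M\<^esub> v = v) \<and>
             (\<forall>k1\<in>K. \<forall>k2\<in>K. ham D (\<tau> (k1 \<otimes>\<^bsub>M\<^esub> k2)) (\<tau> k1 \<circ> \<tau> k2) \<le> \<epsilon>) \<and>
             (\<forall>k1\<in>K. \<forall>k2\<in>K. k1 \<noteq> k2 \<longrightarrow> ham D (\<tau> k1) (\<tau> k2) \<ge> 1 - \<epsilon>) \<and>
             (\<forall>k\<in>K. \<forall>v\<in>D. card {u \<in> D. \<tau> k u = v} \<le> 1)"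
    proof (intro exI[of _ D] exI[of _ "\<lambda>m. \<sigma> (h m)"] conjI ballI impI)
      show "finite D" "D \<noteq> {}" using D by auto
      fix m assume "m \<in> carrier M"
      hence "h m \<in> carrier G" by (rule hc)
      hence "bij_betw (\<sigma> (h m)) D D" using bij by simp
      thus "\<sigma> (h m) ` D \<subseteq> D" by (simp add: bij_betw_def)
    next
      fix v assume "v \<in> D" thus "\<sigma> (h \<one>\<^bsub>M\<^esub>) v = v" using one assms(5) by simp
    next
      fix k1 k2 assume "k1 \<in> K" "k2 \<in> K"
      thus "ham D (\<sigma> (h (k1 \<otimes>\<^bsub>M\<^esub> k2))) (\<sigma> (h k1) \<circ> \<sigma> (h k2)) \<le> \<epsilon>"
      proof -
        have e1: "h (k1 \<otimes>\<^bsub>M\<^esub> k2) = h k1 \<otimes>\<^bsub>G\<^esub> h k2" using hm[OF subsetD[OF Ksub \<open>k1 \<in> K\<close>] subsetD[OF Ksub \<open>k2 \<in> K\<close>]] .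
        have "h k1 \<in> h ` K" "h k2 \<in> h ` K" using \<open>k1 \<in> K\<close> \<open>k2 \<in> K\<close> by auto
        thus ?thesis unfolding e1 using mul \<open>k1 \<in> K\<close> \<open>k2 \<in> K\<close> by simp
      qed
    next
      fix k1 k2 assume "k1 \<in> K" "k2 \<in> K" "k1 \<noteq> k2"
      moreover hence "h k1 \<noteq> h k2" using inj_onD[OF assms(6) _ subsetD[OF Ksub \<open>k1 \<in> K\<close>] subsetD[OF Ksub \<open>k2 \<in> K\<close>]] by metis
      ultimately show "ham D (\<sigma> (h k1)) (\<sigma> (h k2)) \<ge> 1 - \<epsilon>" using dis by simp
    next
      fix k v assume "k \<in> K" "v \<in> D"
      thus "card {u \<in> D. \<sigma> (h k) u = v} \<le> 1"
      proof -
        have "h k \<in> carrier G" using hc[OF subsetD[OF Ksub \<open>k \<in> K\<close>]] .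
        hence "bij_betw (\<sigma> (h k)) D D" using bij by simp
        thus ?thesis using fiber_le1[OF _ D(1)] by simp
      qed
    qed
  qed
qed

end
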